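(* Let $G=(V,E)$ be a $3$-uniform hypergraph. Consider the set of minimal canonical N-eigenvectors of the Laplacian tensor $\mathcal D-\mathcal A$ corresponding to the eigenvalue $0$, modulo the equivalence relation generated by $\mathbf x\sim e^{\theta\sqrt{-1}}\mathbf x$ ($\theta\in\mathbb R$) and $\mathbf x\sim\overline{\mathbf x}$ (complex conjugation); each equivalence class is a "minimal canonical conjugated N-eigenvector pair". Then the number of these classes equals the number of tripartite connected components of $G$ (counted with multiplicity as explained below).
   Context: A $3$-uniform hypergraph $G=(V,E)$ has vertex set $V=[n]$ ($n\ge3$) and nonempty edge set $E$ of $3$-element subsets; $E_i=\{e\in E:i\in e\}$, $d_i=|E_i|$. Connected components are maximal sets of vertices pairwise joined by chains of edges with consecutive edges intersecting; isolated vertices are also components. $\mathcal A$: $a_{i_1i_2i_3}=\frac12$ if $\{i_1,i_2,i_3\}\in E$, else $0$; $\mathcal D$ diagonal with $d_{iii}=d_i$; so $((\mathcal D-\mathcal A)\mathbf x^{2})_i=d_ix_i^{2}-\sum_{e\in E_i}\prod_{j\in e\setminus\{i\}}x_j$. A nonzero $\mathbf x\in\mathbb C^n$ is an eigenvector of $\mathcal T$ for $\lambda$ if $(\mathcal T\mathbf x^{2})_i=\lambda x_i^{2}$ for all $i$. It is an N-eigenvector if no nonzero complex multiple of $\mathbf x$ lies in $\mathbb R^n$; canonical if $\max_i|x_i|=1$; an eigenvector of eigenvalue $0$ is minimal if no eigenvector of eigenvalue $0$ has support strictly contained in its support. A tripartition of a vertex set $C$ (relative to the edges $e\subseteq C$)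 is an unordered partition $\{R,S,T\}$ of $C$ into three nonempty sets such that every edge $e\subseteq C$ either is contained in one of $R,S,T$ or meets each of $R,S,T$. A connected component $C$ of $G$ contributes to the count of tripartite connected components the number of its tripartitions (two tripartitions are the same only if they agree as unordered set partitions); the number of tripartite connected components of $G$ is the sum of these contributions over all connected components. *)

theory Defs
  imports Complex_Main "HOL-Library.Disjoint_Sets"
begin

text \<open>Vertices are the elements of a finite type 'a (playing the role of [n], n = CARD('a)).
  Edges E :: 'a set set. Vectors in C^n are functions 'a \<Rightarrow> complex.\<close>

definition edges_at :: "'a set set \<Rightarrow> 'a \<Rightarrow> 'a set set" where
  "edges_at E i = {e \<in> E. i \<in> e}"

definition degree :: "'a set set \<Rightarrow> 'a \<Rightarrow> nat" where
  "degree E i = card (edges_at E i)"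

definition lap_apply :: "'a set set \<Rightarrow> ('a \<Rightarrow> complex) \<Rightarrow> 'a \<Rightarrow> complex" where
  "lap_apply E x i = of_nat (degree E i) * (x i)^2
      - (\<Sum>e\<in>edges_at E i. \<Prod>j\<in>e - {i}. x j)"

definition lap_eigvec :: "'a set set \<Rightarrow> complex \<Rightarrow> ('a \<Rightarrow> complex) \<Rightarrow> bool" where
  "lap_eigvec E lam x \<longleftrightarrow> x \<noteq> (\<lambda>_. 0) \<and> (\<forall>i. lap_apply E x i = lam * (x i)^2)"

definition supp :: "('a \<Rightarrow> complex) \<Rightarrow> 'a set" where
  "supp x = {i. x i \<noteq> 0}"

definition N_vec :: "('a \<Rightarrow> complex) \<Rightarrow> bool" where
  "N_vec x \<longleftrightarrow> \<not> (\<exists>c::complex. c \<noteq> 0 \<and> (\<forall>i. c * x i \<in> \<real>))"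

definition canonical :: "('a::finite \<Rightarrow> complex) \<Rightarrow> bool" where
  "canonical x \<longleftrightarrow> Max (range (\<lambda>i. cmod (x i))) = 1"

definition minimal0 :: "'a set set \<Rightarrow> ('a \<Rightarrow> complex) \<Rightarrow> bool" where
  "minimal0 E x \<longleftrightarrow> lap_eigvec E 0 x \<and> \<not> (\<exists>y. lap_eigvec E 0 y \<and> supp y \<subset> supp x)"

definition MCN :: "'a::finite set set \<Rightarrow> ('a \<Rightarrow> complex) set" where
  "MCN E = {x. lap_eigvec E 0 x \<and> N_vec x \<and> canonical x \<and> minimal0 E x}"

definition gen_rel :: "'a::finite set set \<Rightarrow> (('a \<Rightarrow> complex) \<times> ('a \<Rightarrow> complex)) set" where
  "gen_rel E = {(x, y). x \<in> MCN E \<and> y \<in> MCN E \<and>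
      ((\<exists>\<theta>::real. y = (\<lambda>i. cis \<theta> * x i)) \<or> y = (\<lambda>i. cnj (x i)))}"

definition pair_rel :: "'a::finite set set \<Rightarrow> (('a \<Rightarrow> complex) \<times> ('a \<Rightarrow> complex)) set" where
  "pair_rel E = (gen_rel E \<union> (gen_rel E)\<inverse>)\<^sup>*"

text \<open>Connected components (isolated vertices included).\<close>
definition adj :: "'a set set \<Rightarrow> ('a \<times> 'a) set" where
  "adj E = {(i, j). \<exists>e\<in>E. i \<in> e \<and> j \<in> e}"

definition components :: "'a set set \<Rightarrow> 'a set set" where
  "components E = UNIV // ((adj E)\<^sup>*)"

definition tripartitions :: "'a set set \<Rightarrow> 'a set \<Rightarrow> 'a set set set" where
  "tripartitions E C = {P. partition_on C P \<and> card P = 3 \<and>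
      (\<forall>e\<in>E. e \<subseteq> C \<longrightarrow> (\<exists>B\<in>P. e \<subseteq> B) \<or> (\<forall>B\<in>P. e \<inter> B \<noteq> {}))}"

definition num_tripartite_components :: "'a set set \<Rightarrow> nat" where
  "num_tripartite_components E = (\<Sum>C\<in>components E. card (tripartitions E C))"

end

theory Submission
  imports Defs
begin

definition om :: complex where "om = Complex (-1/2) (sqrt 3 / 2)"

lemma om_sq: "om^2 = Complex (-1/2) (- sqrt 3 / 2)"
  by (simp add: om_def Re_power2 Im_power2 complex_eq_iff power2_eq_square)

lemma om_cube: "om^3 = 1"
proof -
  have "om^3 = om * om^2" by (simp add: power_def)
  thus ?thesis unfolding om_sq by (simp add: om_def complex_eq_iff field_simps)
qed

lemma om_ne1: "om \<noteq> 1" by (simp add: om_def complex_eq_iff)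
lemma om2_ne1: "om^2 \<noteq> 1" unfolding om_sq by (simp add: complex_eq_iff)
lemma om_ne_om2: "om \<noteq> om^2" unfolding om_sq by (simp add: om_def complex_eq_iff)
lemma cnj_om: "cnj om = om^2" unfolding om_sq by (simp add: om_def complex_eq_iff)
lemma cnj_om2: "cnj (om^2) = om" unfolding om_sq by (simp add: om_def complex_eq_iff)
lemma om_not_real: "om \<notin> \<real>" by (simp add: om_def complex_is_Real_iff)
lemma om_norm: "cmod om = 1" by (simp add: om_def cmod_def power2_eq_square)
lemma om2_norm: "cmod (om^2) = 1" by (simp add: om_norm norm_power)
lemma om_sum: "1 + om + om^2 = 0" unfolding om_sq by (simp add: om_def complex_eq_iff)

lemma cube_root_iff: "(z::complex)^3 = 1 \<longleftrightarrow> z = 1 \<or> z = om \<or> z = om^2"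
proof -
  have "z^3 - 1 = (z - 1) * (z - om) * (z - om^2)"
  proof -
    have "(z - 1) * (z - om) * (z - om^2) = z^3 - (1 + om + om^2) * z^2 + (om + om^2 + om^3) * z - om^3"
      by (simp add: algebra_simps power2_eq_square power3_eq_cube)
    also have "om + om^2 + om^3 = om * (1 + om + om^2)" by (simp add: algebra_simps power2_eq_square power3_eq_cube)
    finally show ?thesis by (simp add: om_sum om_cube)
  qed
  thus ?thesis by (metis (no_types) eq_iff_diff_eq_0 mult_eq_0_iff)
qed

definition gcomp :: "'a set set \<Rightarrow> 'a \<Rightarrow> 'a set" where
  "gcomp E v = (adj E)\<^sup>* `` {v}"

lemma adj_sym: "(i,j) \<in> adj E \<Longrightarrow> (j,i) \<in> adj E"
  by (auto simp: adj_def)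

lemma sym_adj: "sym (adj E)"
  by (auto simp: sym_def adj_def)

lemma rt_sym: "(i,j) \<in> (adj E)\<^sup>* \<Longrightarrow> (j,i) \<in> (adj E)\<^sup>*"
  using sym_rtrancl[OF sym_adj, of E] unfolding sym_def by blast

lemma comp_self: "v \<in> gcomp E v"
  by (simp add: gcomp_def)

lemma comp_eq: "w \<in> gcomp E v \<Longrightarrow> gcomp E w = gcomp E v"
proof -
  assume "w \<in> gcomp E v"
  hence vw: "(v,w) \<in> (adj E)\<^sup>*" by (simp add: gcomp_def)
  hence wv: "(w,v) \<in> (adj E)\<^sup>*" by (rule rt_sym)
  show ?thesis
  proof
    show "gcomp E w \<subseteq> gcomp E v" unfolding gcomp_def using vw by (auto intro: rtrancl_trans)
    show "gcomp E v \<subseteq> gcomp E w" unfolding gcomp_def using wv by (auto intro: rtrancl_trans)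
  qed
qed

lemma components_eq: "components E = range (gcomp E)"
  by (auto simp: components_def gcomp_def quotient_def)

lemma edge_in_comp: "e \<in> E \<Longrightarrow> i \<in> e \<Longrightarrow> i \<in> gcomp E v \<Longrightarrow> e \<subseteq> gcomp E v"
proof
  fix j assume "e \<in> E" "i \<in> e" "i \<in> gcomp E v" "j \<in> e"
  hence "(i,j) \<in> adj E" by (auto simp: adj_def)
  with \<open>i \<in> gcomp E v\<close> show "j \<in> gcomp E v" unfolding gcomp_def
    by (auto intro: rtrancl_into_rtrancl)
qed

lemma edge_out_comp: "e \<in> E \<Longrightarrow> i \<in> e \<Longrightarrow> i \<notin> gcomp E v \<Longrightarrow> e \<inter> gcomp E v = {}"
proof (rule ccontr)
  assume a: "e \<in> E" "i \<in> e" "i \<notin> gcomp E v" "e \<inter> gcomp E v \<noteq> {}"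
  then obtain j where "j \<in> e" "j \<in> gcomp E v" by auto
  with a edge_in_comp[of e E j v] show False by auto
qed

lemma comp_closed:
  assumes "v \<in> S" "\<And>i j. (i,j) \<in> adj E \<Longrightarrow> i \<in> S \<Longrightarrow> j \<in> S"
  shows "gcomp E v \<subseteq> S"
proof
  fix j assume "j \<in> gcomp E v"
  hence "(v,j) \<in> (adj E)\<^sup>*" by (simp add: gcomp_def)
  thus "j \<in> S" by (induction rule: rtrancl_induct) (use assms in auto)
qed

lemma comp_induct:
  assumes "j \<in> gcomp E v" "P v" "\<And>i j. i \<in> gcomp E v \<Longrightarrow> (i,j) \<in> adj E \<Longrightarrow> P i \<Longrightarrow> P j"
  shows "P j"
proof -
  have "(v,j) \<in> (adj E)\<^sup>*" using assms(1) by (simp add: gcomp_def)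
  thus ?thesis
  proof (induction rule: rtrancl_induct)
    case base then show ?case using assms(2) .
  next
    case (step y z)
    then show ?case using assms(3)[of y z] by (simp add: gcomp_def)
  qed
qed

lemma edge3:
  assumes "card e = 3" "i \<in> e"
  obtains j k where "e = {i,j,k}" "i \<noteq> j" "i \<noteq> k" "j \<noteq> k"
proof -
  obtain a b c where e: "e = {a,b,c}" "a \<noteq> b" "b \<noteq> c" "a \<noteq> c"
    using assms(1) by (auto simp: card_3_iff)
  show ?thesis
  proof (cases "i = a")
    case True then show ?thesis using that[of b c] e by auto
  next
    case False
    show ?thesis
    proof (cases "i = b")
      case True then show ?thesis using that[of a c] e by auto
    next
      case False
      with \<open>i \<noteq> a\<close> assms(2) e have "i = c" by auto
      then show ?thesis using that[of a b] e by auto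
    qed
  qed
qed

lemma prod_edge:
  assumes "e = {i,j,k}" "i \<noteq> j" "i \<noteq> k" "j \<noteq> k"
  shows "(\<Prod>l\<in>e-{i}. x l) = x j * x k"
proof -
  have "e - {i} = {j,k}" using assms by auto
  thus ?thesis using assms by simp
qed

lemma finite_edges_at: "finite (edges_at (E::'a::finite set set) i)"
  by (rule finite)

lemma avg_eq:
  fixes f :: "'b \<Rightarrow> complex"
  assumes fin: "finite A" and bd: "\<forall>a\<in>A. cmod (f a) \<le> cmod z"
    and sm: "(\<Sum>a\<in>A. f a) = of_nat (card A) * z" and a: "a \<in> A"
  shows "f a = z"
proof -
  have "(\<Sum>a\<in>A. Re (f a * cnj z)) = Re ((\<Sum>a\<in>A. f a) * cnj z)"
    by (simp add: sum_distrib_right)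
  also have "\<dots> = Re (of_nat (card A) * (z * cnj z))" by (simp add: sm mult.assoc)
  also have "\<dots> = of_nat (card A) * (cmod z)^2"
    by (simp flip: complex_norm_square)
  finally have s: "(\<Sum>a\<in>A. Re (f a * cnj z)) = (\<Sum>a\<in>A. (cmod z)^2)" by simp
  have le: "\<forall>b\<in>A. Re (f b * cnj z) \<le> (cmod z)^2"
  proof
    fix b assume "b \<in> A"
    have "Re (f b * cnj z) \<le> cmod (f b * cnj z)" by (rule complex_Re_le_cmod)
    also have "\<dots> = cmod (f b) * cmod z" by (simp add: norm_mult)
    also have "\<dots> \<le> cmod z * cmod z" using bd \<open>b \<in> A\<close> by (simp add: mult_right_mono)
    finally show "Re (f b * cnj z) \<le> (cmod z)^2" by (simp add: power2_eq_square)
  qed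
  have eq: "Re (f a * cnj z) = (cmod z)^2"
  proof (rule ccontr)
    assume "Re (f a * cnj z) \<noteq> (cmod z)^2"
    with le a have "Re (f a * cnj z) < (cmod z)^2" by force
    with fin le a have "(\<Sum>a\<in>A. Re (f a * cnj z)) < (\<Sum>a\<in>A. (cmod z)^2)"
      by (intro sum_strict_mono_ex1) auto
    with s show False by simp
  qed
  have "cmod (f a) ^2 \<le> cmod z ^2" using bd a by (simp add: power_mono)
  hence h: "(Re (f a))^2 + (Im (f a))^2 \<le> (Re z)^2 + (Im z)^2" by (simp add: cmod_power2)
  have h2: "Re (f a) * Re z + Im (f a) * Im z = (Re z)^2 + (Im z)^2"
    using eq by (simp add: cmod_power2)
  have "(Re (f a) - Re z)^2 + (Im (f a) - Im z)^2 \<le> 0"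
    using h h2 by (simp add: power2_diff algebra_simps)
  hence "Re (f a) = Re z \<and> Im (f a) = Im z"
    by (metis add_nonneg_nonneg antisym eq_iff_diff_eq_0 sum_power2_eq_zero_iff zero_le_power2)
  thus ?thesis by (simp add: complex_eq_iff)
qed

lemma max_closed:
  fixes x :: "'a::finite \<Rightarrow> complex"
  assumes card3: "\<forall>e\<in>E. card e = 3" and eig: "\<forall>i. lap_apply E x i = 0"
    and mx: "\<forall>i. cmod (x i) \<le> cmod (x j)" and pos: "x j \<noteq> 0" and e: "e \<in> E" "j \<in> e"
  shows "(\<Prod>l\<in>e-{j}. x l) = (x j)^2 \<and> (\<forall>k\<in>e. cmod (x k) = cmod (x j))"
proof -
  let ?f = "\<lambda>e. \<Prod>l\<in>e-{j}. x l"
  have bd: "\<forall>e'\<in>edges_at E j. cmod (?f e') \<le> cmod ((x j)^2)"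
  proof
    fix e' assume "e' \<in> edges_at E j"
    hence "e' \<in> E" "j \<in> e'" by (auto simp: edges_at_def)
    then obtain k l where kl: "e' = {j,k,l}" "j \<noteq> k" "j \<noteq> l" "k \<noteq> l"
      using card3 edge3 by metis
    have "cmod (?f e') = cmod (x k) * cmod (x l)" using prod_edge[OF kl, of x] by (simp add: norm_mult)
    also have "\<dots> \<le> cmod (x j) * cmod (x j)" using mx by (intro mult_mono) auto
    finally show "cmod (?f e') \<le> cmod ((x j)^2)" by (simp add: norm_mult norm_power power2_eq_square)
  qed
  have sm: "(\<Sum>e'\<in>edges_at E j. ?f e') = of_nat (card (edges_at E j)) * (x j)^2"
    using eig[rule_format, of j] by (simp add: lap_apply_def degree_def)
  have ee: "e \<in> edges_at E j" using e by (simp add: edges_at_def)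
  have p: "?f e = (x j)^2" by (rule avg_eq[OF finite_edges_at bd sm ee])
  obtain k l where kl: "e = {j,k,l}" "j \<noteq> k" "j \<noteq> l" "k \<noteq> l"
    using card3 edge3 e by metis
  have "x k * x l = (x j)^2" using p prod_edge[OF kl, of x] by simp
  hence m: "cmod (x k) * cmod (x l) = cmod (x j) * cmod (x j)"
    by (metis norm_mult power2_eq_square)
  have mj: "cmod (x j) > 0" using pos by simp
  have bk: "cmod (x k) \<le> cmod (x j)" "cmod (x l) \<le> cmod (x j)" using mx by auto
  have "cmod (x k) = cmod (x j)"
  proof (rule ccontr)
    assume "cmod (x k) \<noteq> cmod (x j)"
    hence "cmod (x k) < cmod (x j)" using bk by simp
    hence "cmod (x k) * cmod (x l) < cmod (x j) * cmod (x j)"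
    proof -
      assume lt: "cmod (x k) < cmod (x j)"
      have "cmod (x k) * cmod (x l) \<le> cmod (x k) * cmod (x j)" using bk by (simp add: mult_left_mono)
      also have "\<dots> < cmod (x j) * cmod (x j)" using lt mj by (simp add: mult_strict_right_mono)
      finally show ?thesis .
    qed
    with m show False by simp
  qed
  moreover have "cmod (x l) = cmod (x j)"
  proof (rule ccontr)
    assume "cmod (x l) \<noteq> cmod (x j)"
    hence "cmod (x l) < cmod (x j)" using bk by simp
    hence "cmod (x k) * cmod (x l) < cmod (x j) * cmod (x j)"
    proof -
      assume lt: "cmod (x l) < cmod (x j)"
      have "cmod (x k) * cmod (x l) \<le> cmod (x j) * cmod (x l)" using bk by (simp add: mult_right_mono)
      also have "\<dots> < cmod (x j) * cmod (x j)" using lt mj by (simp add: mult_strict_left_mono)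
      finally show ?thesis .
    qed
    with m show False by simp
  qed
  ultimately show ?thesis using p kl by auto
qed

definition mx :: "('a::finite \<Rightarrow> complex) \<Rightarrow> real" where
  "mx x = Max (range (\<lambda>i. cmod (x i)))"

lemma mx_ge: "cmod (x i) \<le> mx x"
  unfolding mx_def by (rule Max_ge) auto

lemma mx_attained: obtains v where "cmod (x v) = mx x"
proof -
  have "mx x \<in> range (\<lambda>i. cmod (x i))" unfolding mx_def by (rule Max_in) auto
  thus ?thesis using that by auto
qed

lemma eig0: "lap_eigvec E 0 x \<Longrightarrow> \<forall>i. lap_apply E x i = 0"
  by (simp add: lap_eigvec_def)

lemma zero_eig_comp:
  fixes x :: "'a::finite \<Rightarrow> complex"
  assumes card3: "\<forall>e\<in>E. card e = 3" and ev: "lap_eigvec E 0 x"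
  obtains v where "gcomp E v \<subseteq> supp x" "\<forall>i\<in>gcomp E v. cmod (x i) = mx x"
proof -
  obtain v where v: "cmod (x v) = mx x" by (rule mx_attained)
  from ev obtain i where "x i \<noteq> 0" by (auto simp: lap_eigvec_def)
  hence "0 < mx x" using mx_ge[of x i] by (meson order_less_le_trans zero_less_norm_iff)
  have step: "j \<in> {i. cmod (x i) = mx x}" if ij: "(i,j) \<in> adj E" "i \<in> {i. cmod (x i) = mx x}" for i j
  proof -
    obtain e where e: "e \<in> E" "i \<in> e" "j \<in> e" using ij by (auto simp: adj_def)
    have "\<forall>l. cmod (x l) \<le> cmod (x i)" using ij mx_ge by auto
    moreover have "x i \<noteq> 0" using ij \<open>0 < mx x\<close> by auto
    ultimately have "cmod (x j) = cmod (x i)"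
      using max_closed[OF card3 eig0[OF ev] _ _ e(1,2)] e(3) by blast
    thus "j \<in> {i. cmod (x i) = mx x}" using ij by simp
  qed
  have cl: "gcomp E v \<subseteq> {i. cmod (x i) = mx x}"
    by (rule comp_closed[of v _ E]) (use v step in auto)
  moreover have "{i. cmod (x i) = mx x} \<subseteq> supp x" using \<open>0 < mx x\<close> by (auto simp: supp_def)
  ultimately show ?thesis using that by blast
qed

lemma restrict_eig:
  fixes x :: "'a::finite \<Rightarrow> complex"
  assumes card3: "\<forall>e\<in>E. card e = 3" and eig: "\<forall>i. lap_apply E x i = 0"
  shows "lap_apply E (\<lambda>i. if i \<in> gcomp E v then x i else 0) i = 0"
proof (cases "i \<in> gcomp E v")
  case True
  have "(\<Sum>e\<in>edges_at E i. \<Prod>j\<in>e-{i}. (\<lambda>i. if i \<in> gcomp E v then x i else 0) j)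
        = (\<Sum>e\<in>edges_at E i. \<Prod>j\<in>e-{i}. x j)"
  proof (rule sum.cong[OF refl], rule prod.cong[OF refl])
    fix e j assume "e \<in> edges_at E i" "j \<in> e - {i}"
    hence "j \<in> gcomp E v" using edge_in_comp[of e E i v] True by (auto simp: edges_at_def)
    thus "(if j \<in> gcomp E v then x j else 0) = x j" by simp
  qed
  thus ?thesis using eig[rule_format, of i] True by (simp add: lap_apply_def)
next
  case False
  have "(\<Sum>e\<in>edges_at E i. \<Prod>j\<in>e-{i}. (\<lambda>i. if i \<in> gcomp E v then x i else 0) j) = 0"
  proof (rule sum.neutral, rule ballI)
    fix e assume "e \<in> edges_at E i"
    hence e: "e \<in> E" "i \<in> e" by (auto simp: edges_at_def)
    then obtain k l where kl: "e = {i,k,l}" "i \<noteq> k" "i \<noteq> l" "k \<noteq> l"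
      using card3 edge3 by metis
    have "k \<notin> gcomp E v" using edge_out_comp[OF e False] kl by auto
    thus "(\<Prod>j\<in>e-{i}. (\<lambda>i. if i \<in> gcomp E v then x i else 0) j) = 0"
      using prod_edge[OF kl, of "\<lambda>i. if i \<in> gcomp E v then x i else 0"] by simp
  qed
  thus ?thesis using False by (simp add: lap_apply_def)
qed

lemma minimal_struct:
  fixes x :: "'a::finite \<Rightarrow> complex"
  assumes card3: "\<forall>e\<in>E. card e = 3" and mn: "minimal0 E x"
  obtains v where "supp x = gcomp E v" "\<forall>i\<in>gcomp E v. cmod (x i) = mx x"
proof -
  have ev: "lap_eigvec E 0 x" using mn by (simp add: minimal0_def)
  obtain v where v: "gcomp E v \<subseteq> supp x" "\<forall>i\<in>gcomp E v. cmod (x i) = mx x"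
    using zero_eig_comp[OF card3 ev] by blast
  define y where "y = (\<lambda>i. if i \<in> gcomp E v then x i else 0)"
  have "y v \<noteq> 0" using v comp_self[of v E] by (auto simp: y_def supp_def)
  hence "y \<noteq> (\<lambda>_. 0)" by auto
  moreover have "\<forall>i. lap_apply E y i = 0" unfolding y_def using restrict_eig[OF card3 eig0[OF ev]] by blast
  ultimately have "lap_eigvec E 0 y" by (simp add: lap_eigvec_def)
  moreover have "supp y = gcomp E v" using v(1) by (auto simp: y_def supp_def)
  ultimately have "\<not> gcomp E v \<subset> supp x" using mn by (auto simp: minimal0_def)
  hence "supp x = gcomp E v" using v(1) by blast
  thus ?thesis using that v(2) by blast
qed

lemma R3_cover:
  assumes "p^3 = 1" "q^3 = 1" "r^3 = (1::complex)" "s^3 = 1" "p \<noteq> q" "p \<noteq> r" "q \<noteq> r"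
  shows "s = p \<or> s = q \<or> s = r"
  using assms unfolding cube_root_iff using om_ne1 om2_ne1 om_ne_om2 by metis

lemma om4: "om^4 = om"
proof -
  have "om^4 = om^3 * om" by (simp add: power_def)
  thus ?thesis by (simp add: om_cube)
qed

lemma R3_prod:
  assumes "p^3 = 1" "q^3 = 1" "r^3 = (1::complex)" "p \<noteq> q" "p \<noteq> r" "q \<noteq> r"
  shows "q * r = p^2"
proof -
  have a: "om * om^2 = 1" using om_cube by (simp add: power_def)
  have b: "om^2 * om = 1" using a by (simp add: mult.commute)
  have c: "(om^2)^2 = om" using om4 by (simp flip: power_mult)
  show ?thesis using assms unfolding cube_root_iff using a b c
    by (elim disjE) (simp_all add: power2_eq_square)
qed

lemma tri:
  fixes a b c :: complex
  assumes e1: "b * c = a^2" and e2: "a * c = b^2" and nz: "a \<noteq> 0" "b \<noteq> 0" "c \<noteq> 0"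
  shows "a^3 = b^3" "a = b \<Longrightarrow> c = a"
proof -
  show "a^3 = b^3"
  proof -
    have "a^3 = a * (b * c)" using e1 by (simp add: power2_eq_square power3_eq_cube)
    also have "\<dots> = b * (a * c)" by (simp add: algebra_simps)
    also have "\<dots> = b^3" using e2 by (simp add: power2_eq_square power3_eq_cube)
    finally show ?thesis .
  qed
  show "c = a" if "a = b"
  proof -
    have "a * c = a * a" using e2 that by (simp add: power2_eq_square)
    thus ?thesis using nz by simp
  qed
qed

definition good :: "'a set set \<Rightarrow> ('a \<Rightarrow> complex) \<Rightarrow> 'a \<Rightarrow> bool" where
  "good E x v \<longleftrightarrow> supp x = gcomp E v \<and>
     (\<forall>e\<in>E. \<forall>i\<in>e. i \<in> gcomp E v \<longrightarrow> (\<Prod>l\<in>e-{i}. x l) = (x i)^2)"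

lemma MCN_good:
  fixes x :: "'a::finite \<Rightarrow> complex"
  assumes card3: "\<forall>e\<in>E. card e = 3" and x: "x \<in> MCN E"
  obtains v where "good E x v" "\<forall>i\<in>gcomp E v. cmod (x i) = 1"
proof -
  have mn: "minimal0 E x" and ev: "lap_eigvec E 0 x" and cn: "canonical x"
    using x by (auto simp: MCN_def)
  have m1: "mx x = 1" using cn by (simp add: canonical_def mx_def)
  obtain v where v: "supp x = gcomp E v" "\<forall>i\<in>gcomp E v. cmod (x i) = mx x"
    using minimal_struct[OF card3 mn] by blast
  have "\<forall>e\<in>E. \<forall>i\<in>e. i \<in> gcomp E v \<longrightarrow> (\<Prod>l\<in>e-{i}. x l) = (x i)^2"
  proof (intro ballI impI)
    fix e i assume e: "e \<in> E" "i \<in> e" "i \<in> gcomp E v"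
    have "\<forall>l. cmod (x l) \<le> cmod (x i)" using v e mx_ge by metis
    moreover have "x i \<noteq> 0" using v e m1 by auto
    ultimately show "(\<Prod>l\<in>e-{i}. x l) = (x i)^2"
      using max_closed[OF card3 eig0[OF ev] _ _ e(1,2)] by blast
  qed
  thus ?thesis using that v m1 by (auto simp: good_def)
qed

context
  fixes E :: "'a::finite set set" and x :: "'a \<Rightarrow> complex" and v :: 'a
  assumes card3: "\<forall>e\<in>E. card e = 3" and gd: "good E x v"
begin

lemma g_supp: "supp x = gcomp E v" using gd by (simp add: good_def)

lemma g_nz: "i \<in> gcomp E v \<Longrightarrow> x i \<noteq> 0" using g_supp by (auto simp: supp_def)

lemma g_zero: "i \<notin> gcomp E v \<Longrightarrow> x i = 0" using g_supp by (auto simp: supp_def)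

lemma g_edge:
  assumes "e \<in> E" "i \<in> e" "i \<in> gcomp E v"
  obtains j k where "e = {i,j,k}" "i \<noteq> j" "i \<noteq> k" "j \<noteq> k"
    "x j * x k = (x i)^2" "x i * x k = (x j)^2" "x i * x j = (x k)^2"
    "j \<in> gcomp E v" "k \<in> gcomp E v"
proof -
  obtain j k where kl: "e = {i,j,k}" "i \<noteq> j" "i \<noteq> k" "j \<noteq> k"
    using card3 edge3 assms by metis
  have sub: "e \<subseteq> gcomp E v" using edge_in_comp assms by metis
  have h: "\<And>l. l \<in> e \<Longrightarrow> (\<Prod>m\<in>e-{l}. x m) = (x l)^2" using gd assms sub by (auto simp: good_def)
  have "x j * x k = (x i)^2" using h[of i] prod_edge[OF kl, of x] kl by simp
  moreover have "x i * x k = (x j)^2"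
    using h[of j] prod_edge[of e j i k x] kl by (simp add: insert_commute)
  moreover have "x i * x j = (x k)^2"
    using h[of k] prod_edge[of e k i j x] kl by (simp add: insert_commute)
  ultimately show ?thesis using that kl sub by blast
qed

lemma g_cube:
  assumes "i \<in> gcomp E v" shows "(x i)^3 = (x v)^3"
proof -
  have step: "x j ^3 = x v ^3" if h: "i \<in> gcomp E v" "(i,j) \<in> adj E" "x i ^3 = x v ^3" for i j
  proof -
    obtain e where e: "e \<in> E" "i \<in> e" "j \<in> e" using h by (auto simp: adj_def)
    show ?thesis
    proof (cases "i = j")
      case True then show ?thesis using h by simp
    next
      case False
      obtain a b where ab: "e = {i,a,b}" "i \<noteq> a" "i \<noteq> b" "a \<noteq> b"
        "x a * x b = (x i)^2" "x i * x b = (x a)^2" "x i * x a = (x b)^2"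
        "a \<in> gcomp E v" "b \<in> gcomp E v"
        using g_edge[OF e(1,2) h(1)] by blast
      have "x i ^3 = x a ^3" by (rule tri(1)) (use ab g_nz h in auto)
      moreover have "x i ^3 = x b ^3"
        by (rule tri(1)[where a="x i" and b="x b" and c="x a"]) (use ab g_nz h in \<open>auto simp: mult.commute\<close>)
      ultimately show ?thesis using e ab False h by auto
    qed
  qed
  show ?thesis by (rule comp_induct[of i E v "\<lambda>i. x i ^3 = x v ^3", OF assms refl step])
qed

lemma g_root: "i \<in> gcomp E v \<Longrightarrow> (x i / x v)^3 = 1"
  using g_cube g_nz[OF comp_self] by (simp add: power_divide)

lemma g_cover:
  assumes "i \<in> gcomp E v" "a \<in> gcomp E v" "b \<in> gcomp E v" "c \<in> gcomp E v"
    "x a \<noteq> x b" "x a \<noteq> x c" "x b \<noteq> x c"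
  shows "x i = x a \<or> x i = x b \<or> x i = x c"
proof -
  have nz: "x v \<noteq> 0" using g_nz[OF comp_self] .
  have "x i / x v = x a / x v \<or> x i / x v = x b / x v \<or> x i / x v = x c / x v"
    by (rule R3_cover) (use assms g_root nz in auto)
  thus ?thesis using nz by auto
qed

lemma g_two_eq:
  assumes "e = {i,j,k}" "e \<in> E" "e \<subseteq> gcomp E v" "i \<noteq> j" "i \<noteq> k" "j \<noteq> k"
  shows "x i = x j \<Longrightarrow> x k = x i"
proof -
  have ii: "i \<in> e" "i \<in> gcomp E v" using assms by auto
  have h: "\<And>l. l \<in> e \<Longrightarrow> (\<Prod>m\<in>e-{l}. x m) = (x l)^2" using gd assms by (auto simp: good_def)
  have "x i * x k = (x j)^2"
    using h[of j] prod_edge[of e j i k x] assms by (simp add: insert_commute)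
  moreover assume "x i = x j"
  ultimately have "x i * x k = x i * x i" by (simp add: power2_eq_square)
  thus "x k = x i" using g_nz[OF ii(2)] by simp
qed

end

definition lvl :: "('a \<Rightarrow> complex) \<Rightarrow> 'a \<Rightarrow> 'a set" where
  "lvl x i = {j. x j = x i}"

definition Fp :: "('a \<Rightarrow> complex) \<Rightarrow> 'a set set" where
  "Fp x = lvl x ` supp x"

context
  fixes E :: "'a::finite set set" and x :: "'a \<Rightarrow> complex" and v :: 'a
  assumes card3: "\<forall>e\<in>E. card e = 3" and gd: "good E x v"
begin

lemma g_dist:
  assumes "e = {i,j,k}" "e \<in> E" "e \<subseteq> gcomp E v" "i \<noteq> j" "i \<noteq> k" "j \<noteq> k" "x i \<noteq> x j"
  shows "x i \<noteq> x k" "x j \<noteq> x k"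
proof -
  show "x i \<noteq> x k"
  proof
    assume "x i = x k"
    hence "x j = x i" using g_two_eq[OF card3 gd, of e i k j] assms by (auto simp: insert_commute)
    thus False using assms by simp
  qed
  show "x j \<noteq> x k"
  proof
    assume "x j = x k"
    hence "x i = x j" using g_two_eq[OF card3 gd, of e j k i] assms by (auto simp: insert_commute)
    thus False using assms by simp
  qed
qed

definition three :: bool where
  "three \<longleftrightarrow> (\<exists>a\<in>gcomp E v. \<exists>b\<in>gcomp E v. \<exists>c\<in>gcomp E v. x a \<noteq> x b \<and> x a \<noteq> x c \<and> x b \<noteq> x c)"

lemma g_three:
  assumes N: "N_vec x"
  shows three
proof -
  have "\<exists>a\<in>gcomp E v. x a \<noteq> x v"
  proof (rule ccontr)
    assume "\<not> ?thesis"
    hence all: "\<forall>a\<in>gcomp E v. x a = x v" by auto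
    have nz: "x v \<noteq> 0" using g_nz[OF card3 gd comp_self] .
    have "\<forall>i. inverse (x v) * x i \<in> \<real>"
    proof
      fix i show "inverse (x v) * x i \<in> \<real>"
        by (cases "i \<in> gcomp E v") (use all nz g_zero[OF card3 gd] in auto)
    qed
    moreover have "inverse (x v) \<noteq> 0" using nz by simp
    ultimately show False using N unfolding N_vec_def by blast
  qed
  then obtain a where a: "a \<in> gcomp E v" "x a \<noteq> x v" by blast
  have step: "x j = x v \<or> three" if h: "i \<in> gcomp E v" "(i,j) \<in> adj E" "x i = x v \<or> three" for i j
  proof (cases "x j = x i")
    case True then show ?thesis using h by simp
  next
    case False
    hence ij: "i \<noteq> j" by auto
    obtain e where e: "e \<in> E" "i \<in> e" "j \<in> e" using h by (auto simp: adj_def)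
    obtain p q where pq: "e = {i,p,q}" "i \<noteq> p" "i \<noteq> q" "p \<noteq> q"
      "p \<in> gcomp E v" "q \<in> gcomp E v"
      using g_edge[OF card3 gd e(1,2) h(1)] by metis
    have sub: "e \<subseteq> gcomp E v" using edge_in_comp e h by metis
    show ?thesis
    proof (cases "j = p")
      case True
      have "x i \<noteq> x q" "x p \<noteq> x q" using g_dist[OF pq(1) e(1) sub pq(2-4)] False True by auto
      thus ?thesis using False True pq h(1) unfolding three_def by metis
    next
      case False
      hence jq: "j = q" using pq e ij by auto
      have e': "e = {i,q,p}" using pq by auto
      have "x i \<noteq> x p" "x q \<noteq> x p" using g_dist[OF e' e(1) sub pq(3,2)] pq \<open>x j \<noteq> x i\<close> jq by auto
      thus ?thesis using \<open>x j \<noteq> x i\<close> jq pq h(1) unfolding three_def by metis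
    qed
  qed
  have "x a = x v \<or> three"
    by (rule comp_induct[of a E v "\<lambda>j. x j = x v \<or> three", OF a(1) _ step]) simp
  thus three using a by simp
qed

lemma lvl_sub: "i \<in> gcomp E v \<Longrightarrow> lvl x i \<subseteq> gcomp E v"
  using g_nz[OF card3 gd] g_supp[OF card3 gd] by (auto simp: lvl_def supp_def)

lemma g_trip:
  assumes three
  shows "Fp x \<in> tripartitions E (gcomp E v)"
proof -
  let ?C = "gcomp E v"
  obtain a b c where abc: "a \<in> ?C" "b \<in> ?C" "c \<in> ?C" "x a \<noteq> x b" "x a \<noteq> x c" "x b \<noteq> x c"
    using assms unfolding three_def by blast
  have F: "Fp x = lvl x ` ?C" using g_supp[OF card3 gd] by (simp add: Fp_def)
  have part: "partition_on ?C (Fp x)"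
  proof (rule partition_onI)
    show "\<Union>(Fp x) = ?C" unfolding F using lvl_sub by (auto simp: lvl_def)
    show "{} \<notin> Fp x" unfolding F by (auto simp: lvl_def)
    fix p q assume "p \<in> Fp x" "q \<in> Fp x" "p \<noteq> q"
    thus "disjnt p q" unfolding F by (auto simp: lvl_def disjnt_def)
  qed
  have F3: "Fp x = {lvl x a, lvl x b, lvl x c}"
  proof
    show "Fp x \<subseteq> {lvl x a, lvl x b, lvl x c}"
    proof
      fix p assume "p \<in> Fp x"
      then obtain i where i: "i \<in> ?C" "p = lvl x i" unfolding F by blast
      have "x i = x a \<or> x i = x b \<or> x i = x c" using g_cover[OF card3 gd i(1) abc] .
      thus "p \<in> {lvl x a, lvl x b, lvl x c}" using i by (auto simp: lvl_def)
    qed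
    show "{lvl x a, lvl x b, lvl x c} \<subseteq> Fp x" unfolding F using abc by auto
  qed
  have dl: "lvl x a \<noteq> lvl x b" "lvl x a \<noteq> lvl x c" "lvl x b \<noteq> lvl x c"
    using abc by (auto simp: lvl_def set_eq_iff)
  have c3: "card (Fp x) = 3" unfolding F3 using dl by (simp add: card_insert_if)
  have ed: "\<forall>e\<in>E. e \<subseteq> ?C \<longrightarrow> (\<exists>B\<in>Fp x. e \<subseteq> B) \<or> (\<forall>B\<in>Fp x. e \<inter> B \<noteq> {})"
  proof (intro ballI impI)
    fix e assume e: "e \<in> E" "e \<subseteq> ?C"
    obtain i where i: "i \<in> e" using card3 e by (metis card.empty equals0I zero_neq_numeral)
    have iC: "i \<in> ?C" using i e by auto
    obtain j k where jk: "e = {i,j,k}" "i \<noteq> j" "i \<noteq> k" "j \<noteq> k" "j \<in> ?C" "k \<in> ?C"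
      using g_edge[OF card3 gd e(1) i iC] by metis
    show "(\<exists>B\<in>Fp x. e \<subseteq> B) \<or> (\<forall>B\<in>Fp x. e \<inter> B \<noteq> {})"
    proof (cases "x i = x j")
      case True
      hence "x k = x i" using g_two_eq[OF card3 gd jk(1) e(1) e(2) jk(2-4)] by simp
      hence "e \<subseteq> lvl x i" using True jk(1) by (auto simp: lvl_def)
      moreover have "lvl x i \<in> Fp x" unfolding F using iC by simp
      ultimately show ?thesis by blast
    next
      case False
      have d: "x i \<noteq> x k" "x j \<noteq> x k" using g_dist[OF jk(1) e(1) e(2) jk(2-4) False] by auto
      have "\<forall>B\<in>Fp x. e \<inter> B \<noteq> {}"
      proof
        fix B assume "B \<in> Fp x"
        then obtain l where l: "l \<in> ?C" "B = lvl x l" unfolding F by blast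
        have "x l = x i \<or> x l = x j \<or> x l = x k"
          using g_cover[OF card3 gd l(1) iC jk(5) jk(6) False d] .
        thus "e \<inter> B \<noteq> {}" using l jk(1) by (auto simp: lvl_def)
      qed
      thus ?thesis by blast
    qed
  qed
  show ?thesis using part c3 ed by (simp add: tripartitions_def)
qed

end

lemma unit_cis: "cmod c = 1 \<Longrightarrow> c = cis (Arg c)"
proof -
  assume h: "cmod c = 1"
  hence "c \<noteq> 0" by auto
  hence "sgn c = cis (Arg c)" using Arg_correct by blast
  moreover have "sgn c = c" using h by (simp add: sgn_div_norm)
  ultimately show ?thesis by simp
qed

lemma good_eig:
  fixes x :: "'a::finite \<Rightarrow> complex"
  assumes card3: "\<forall>e\<in>E. card e = 3" and gd: "good E x v"
  shows "lap_apply E x i = 0"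
proof (cases "i \<in> gcomp E v")
  case True
  have "(\<Sum>e\<in>edges_at E i. \<Prod>j\<in>e-{i}. x j) = (\<Sum>e\<in>edges_at E i. (x i)^2)"
    using gd True by (intro sum.cong) (auto simp: good_def edges_at_def)
  thus ?thesis by (simp add: lap_apply_def degree_def)
next
  case False
  have z: "x i = 0" using g_zero[OF card3 gd False] .
  have "(\<Sum>e\<in>edges_at E i. \<Prod>j\<in>e-{i}. x j) = 0"
  proof (rule sum.neutral, rule ballI)
    fix e assume "e \<in> edges_at E i"
    hence e: "e \<in> E" "i \<in> e" by (auto simp: edges_at_def)
    then obtain k l where kl: "e = {i,k,l}" "i \<noteq> k" "i \<noteq> l" "k \<noteq> l"
      using card3 edge3 by metis
    have "k \<notin> gcomp E v" using edge_out_comp[OF e False] kl by auto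
    thus "(\<Prod>j\<in>e-{i}. x j) = 0"
      using prod_edge[OF kl, of x] g_zero[OF card3 gd] by simp
  qed
  thus ?thesis using z by (simp add: lap_apply_def)
qed

lemma construct:
  fixes E :: "'a::finite set set"
  assumes card3: "\<forall>e\<in>E. card e = 3" and P: "P \<in> tripartitions E (gcomp E v)"
  shows "\<exists>x\<in>MCN E. Fp x = P"
proof -
  let ?C = "gcomp E v"
  have pon: "partition_on ?C P" and c3: "card P = 3"
    and ed: "\<forall>e\<in>E. e \<subseteq> ?C \<longrightarrow> (\<exists>B\<in>P. e \<subseteq> B) \<or> (\<forall>B\<in>P. e \<inter> B \<noteq> {})"
    using P by (auto simp: tripartitions_def)
  obtain R S T where RST: "P = {R,S,T}" "R \<noteq> S" "S \<noteq> T" "R \<noteq> T"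
    using c3 by (auto simp: card_3_iff)
  have U: "R \<union> S \<union> T = ?C" using pon RST by (auto simp: partition_on_def)
  have ne: "R \<noteq> {}" "S \<noteq> {}" "T \<noteq> {}" using pon RST by (auto simp: partition_on_def)
  have dj: "R \<inter> S = {}" "S \<inter> T = {}" "R \<inter> T = {}"
    using pon RST by (auto simp: partition_on_def disjoint_def)
  define x where "x i = (if i \<in> R then 1 else if i \<in> S then om else if i \<in> T then om^2 else 0)" for i
  have xR: "i \<in> R \<Longrightarrow> x i = 1" for i by (simp add: x_def)
  have xS: "i \<in> S \<Longrightarrow> x i = om" for i using dj by (auto simp: x_def)
  have xT: "i \<in> T \<Longrightarrow> x i = om^2" for i using dj by (auto simp: x_def)
  have xO: "i \<notin> ?C \<Longrightarrow> x i = 0" for i using U by (auto simp: x_def)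
  have om0: "om \<noteq> 0" "om^2 \<noteq> 0" using om_norm om2_norm by auto
  have vals: "i \<in> ?C \<Longrightarrow> x i = 1 \<or> x i = om \<or> x i = om^2" for i using U xR xS xT by blast
  have nzC: "i \<in> ?C \<Longrightarrow> x i \<noteq> 0" for i using vals[of i] om0 by auto
  have supp: "supp x = ?C"
    using nzC xO by (auto simp: supp_def)
  have cl: "j \<in> R \<or> j \<in> S \<or> j \<in> T \<or> j \<notin> ?C" for j using U by blast
  have eR: "x j = 1 \<longleftrightarrow> j \<in> R" for j
    using cl[of j] xR[of j] xS[of j] xT[of j] xO[of j] om_ne1 om2_ne1 by auto
  have eS: "x j = om \<longleftrightarrow> j \<in> S" for j
    using cl[of j] xR[of j] xS[of j] xT[of j] xO[of j] om_ne1 om_ne_om2 om0 by auto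
  have eT: "x j = om^2 \<longleftrightarrow> j \<in> T" for j
    using cl[of j] xR[of j] xS[of j] xT[of j] xO[of j] om2_ne1 om_ne_om2 om0 by auto
  have lR: "lvl x i = R" if "i \<in> R" for i
    unfolding lvl_def xR[OF that] using eR by blast
  have lS: "lvl x i = S" if "i \<in> S" for i
    unfolding lvl_def xS[OF that] using eS by blast
  have lT: "lvl x i = T" if "i \<in> T" for i
    unfolding lvl_def xT[OF that] using eT by blast
  obtain r where r: "r \<in> R" using ne by blast
  obtain s where s: "s \<in> S" using ne by blast
  obtain t where t: "t \<in> T" using ne by blast
  have Fx: "Fp x = P"
  proof -
    have "Fp x = lvl x ` (R \<union> S \<union> T)" using supp U by (simp add: Fp_def)
    also have "\<dots> = {R,S,T}"
    proof
      show "lvl x ` (R \<union> S \<union> T) \<subseteq> {R,S,T}" using lR lS lT by blast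
      have "R \<in> lvl x ` (R \<union> S \<union> T)" by (rule image_eqI[of _ _ r]) (use lR[OF r] r in auto)
      moreover have "S \<in> lvl x ` (R \<union> S \<union> T)" by (rule image_eqI[of _ _ s]) (use lS[OF s] s in auto)
      moreover have "T \<in> lvl x ` (R \<union> S \<union> T)" by (rule image_eqI[of _ _ t]) (use lT[OF t] t in auto)
      ultimately show "{R,S,T} \<subseteq> lvl x ` (R \<union> S \<union> T)" by blast
    qed
    finally show ?thesis using RST by simp
  qed
  have roots: "i \<in> ?C \<Longrightarrow> (x i)^3 = 1" for i using vals cube_root_iff by blast
  have gd: "good E x v"
    unfolding good_def
  proof (intro conjI supp ballI impI)
    fix e i assume e: "e \<in> E" "i \<in> e" "i \<in> ?C"
    obtain j k where jk: "e = {i,j,k}" "i \<noteq> j" "i \<noteq> k" "j \<noteq> k"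
      using card3 edge3 e by metis
    have sub: "e \<subseteq> ?C" using edge_in_comp e by metis
    have "x j * x k = (x i)^2"
    proof (cases "\<exists>B\<in>P. e \<subseteq> B")
      case True
      then obtain B where "B \<in> P" "e \<subseteq> B" by blast
      hence B: "i \<in> B" "j \<in> B" "k \<in> B" using jk by auto
      have "B = R \<or> B = S \<or> B = T" using \<open>B \<in> P\<close> RST by auto
      hence "x j = x i \<and> x k = x i"
        using B xR xS xT by (elim disjE) simp_all
      thus ?thesis by (simp add: power2_eq_square)
    next
      case False
      hence all: "\<forall>B\<in>P. e \<inter> B \<noteq> {}" using ed e sub by blast
      have "R \<in> P" "S \<in> P" "T \<in> P" using RST by auto
      then obtain a1 a2 a3 where a: "a1 \<in> e" "a1 \<in> R" "a2 \<in> e" "a2 \<in> S" "a3 \<in> e" "a3 \<in> T"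
        using all by (metis disjoint_iff)
      have v: "x a1 = 1" "x a2 = om" "x a3 = om^2" using a xR xS xT by auto
      have cov: "\<And>a. a \<in> e \<Longrightarrow> a = i \<or> a = j \<or> a = k" using jk by auto
      have two: False if "\<forall>a\<in>e. x a = p \<or> x a = q" for p q
      proof -
        have "1 = p \<or> 1 = q" "om = p \<or> om = q" "om^2 = p \<or> om^2 = q"
          using that a v by metis+
        thus False using om_ne1 om2_ne1 om_ne_om2 by metis
      qed
      have d: "x i \<noteq> x j" "x i \<noteq> x k" "x j \<noteq> x k"
      proof -
        show "x i \<noteq> x j"
        proof
          assume "x i = x j" thus False using two[of "x i" "x k"] cov by metis
        qed
        show "x i \<noteq> x k"
        proof
          assume "x i = x k" thus False using two[of "x i" "x j"] cov by metis
        qed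
        show "x j \<noteq> x k"
        proof
          assume "x j = x k" thus False using two[of "x i" "x j"] cov by metis
        qed
      qed
      show ?thesis by (rule R3_prod) (use roots sub jk d in auto)
    qed
    thus "(\<Prod>l\<in>e-{i}. x l) = (x i)^2" using prod_edge[OF jk, of x] by simp
  qed
  have ev: "lap_eigvec E 0 x"
    unfolding lap_eigvec_def using good_eig[OF card3 gd] xR[OF r] by (auto simp: fun_eq_iff intro!: exI[of _ r])
  have N: "N_vec x"
    unfolding N_vec_def
  proof
    assume "\<exists>c. c \<noteq> 0 \<and> (\<forall>i. c * x i \<in> \<real>)"
    then obtain c where c: "c \<noteq> 0" "\<forall>i. c * x i \<in> \<real>" by blast
    have "c * x s / (c * x r) \<in> \<real>" using c(2) by (intro Reals_divide) auto
    hence "om \<in> \<real>" using xR[OF r] xS[OF s] c by simp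
    thus False using om_not_real by simp
  qed
  have can: "canonical x"
    unfolding canonical_def
  proof (rule Max_eqI)
    show "finite (range (\<lambda>i. cmod (x i)))" by simp
    show "1 \<in> range (\<lambda>i. cmod (x i))" using xR[OF r] by (metis norm_one rangeI)
    fix y assume "y \<in> range (\<lambda>i. cmod (x i))"
    then obtain i where "y = cmod (x i)" by blast
    thus "y \<le> 1" using vals[of i] xO[of i] om_norm om2_norm by (cases "i \<in> ?C") auto
  qed
  have mn: "minimal0 E x"
    unfolding minimal0_def
  proof (intro conjI ev notI)
    assume "\<exists>y. lap_eigvec E 0 y \<and> supp y \<subset> supp x"
    then obtain y where y: "lap_eigvec E 0 y" "supp y \<subset> ?C" using supp by auto
    obtain w where w: "gcomp E w \<subseteq> supp y" using zero_eig_comp[OF card3 y(1)] by blast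
    have "w \<in> gcomp E w" by (rule comp_self)
    hence "w \<in> ?C" using w y(2) by (meson psubset_imp_subset subsetD)
    hence "gcomp E w = ?C" by (rule comp_eq)
    thus False using w y by blast
  qed
  show ?thesis using ev N can mn Fx by (auto simp: MCN_def)
qed

lemma lap_cnj: "lap_apply E (\<lambda>i. cnj (x i)) i = cnj (lap_apply E x i)"
  by (simp add: lap_apply_def)

lemma supp_cnj: "supp (\<lambda>i. cnj (x i)) = supp x"
  by (simp add: supp_def)

lemma eig_cnj: "lap_eigvec E 0 (\<lambda>i. cnj (x i)) \<longleftrightarrow> lap_eigvec E 0 x"
proof -
  have "(\<lambda>i. cnj (x i)) \<noteq> (\<lambda>_. 0) \<longleftrightarrow> x \<noteq> (\<lambda>_. 0)" by (auto simp: fun_eq_iff)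
  moreover have "(\<forall>i. lap_apply E (\<lambda>i. cnj (x i)) i = 0) \<longleftrightarrow> (\<forall>i. lap_apply E x i = 0)"
    by (simp add: lap_cnj)
  ultimately show ?thesis by (simp add: lap_eigvec_def)
qed

lemma MCN_cnj: "x \<in> MCN E \<Longrightarrow> (\<lambda>i. cnj (x i)) \<in> MCN E"
proof -
  assume x: "x \<in> MCN E"
  have ev: "lap_eigvec E 0 (\<lambda>i. cnj (x i))" using x eig_cnj by (auto simp: MCN_def)
  have N: "N_vec (\<lambda>i. cnj (x i))"
    unfolding N_vec_def
  proof
    assume "\<exists>c. c \<noteq> 0 \<and> (\<forall>i. c * cnj (x i) \<in> \<real>)"
    then obtain c where c: "c \<noteq> 0" "\<forall>i. c * cnj (x i) \<in> \<real>" by blast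
    have "\<forall>i. cnj c * x i \<in> \<real>"
    proof
      fix i
      have "c * cnj (x i) \<in> \<real>" using c by blast
      hence "cnj (c * cnj (x i)) \<in> \<real>" by (simp add: Reals_cnj_iff)
      thus "cnj c * x i \<in> \<real>" by simp
    qed
    moreover have "cnj c \<noteq> 0" using c by simp
    ultimately show False using x by (auto simp: MCN_def N_vec_def)
  qed
  have can: "canonical (\<lambda>i. cnj (x i))" using x by (simp add: MCN_def canonical_def)
  have mn: "minimal0 E (\<lambda>i. cnj (x i))"
    using x ev by (simp add: MCN_def minimal0_def supp_cnj)
  show ?thesis using ev N can mn by (simp add: MCN_def)
qed

lemma Fp_cis: "Fp (\<lambda>i. cis t * x i) = Fp x"
proof -
  have "cis t \<noteq> 0" by (metis cis_neq_zero)
  hence "supp (\<lambda>i. cis t * x i) = supp x" and "lvl (\<lambda>i. cis t * x i) = lvl x"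
    by (auto simp: supp_def lvl_def fun_eq_iff)
  thus ?thesis by (simp add: Fp_def)
qed

lemma Fp_cnj: "Fp (\<lambda>i. cnj (x i)) = Fp x"
proof -
  have "lvl (\<lambda>i. cnj (x i)) = lvl x" by (auto simp: lvl_def fun_eq_iff)
  thus ?thesis by (simp add: Fp_def supp_cnj)
qed

lemma gen_Fp: "(x,y) \<in> gen_rel E \<Longrightarrow> Fp x = Fp y"
  by (auto simp: gen_rel_def Fp_cis Fp_cnj)

lemma pair_Fp: "(x,y) \<in> pair_rel E \<Longrightarrow> Fp x = Fp y"
  unfolding pair_rel_def
proof (induction rule: rtrancl_induct)
  case (step y z)
  thus ?case using gen_Fp by blast
qed simp

lemma Union_Fp: "\<Union>(Fp x) = supp x"
  by (auto simp: Fp_def lvl_def supp_def)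

lemma root_match:
  assumes "p^3 = 1" "q^3 = 1" "a^3 = 1" "b^3 = (1::complex)" "a \<noteq> 1" "b \<noteq> 1"
    "p = 1 \<longleftrightarrow> q = 1" "p = a \<longleftrightarrow> q = b"
  shows "(b = a \<longrightarrow> q = p) \<and> (b \<noteq> a \<longrightarrow> q = cnj p)"
  using assms unfolding cube_root_iff
  using om_ne1 om2_ne1 om_ne_om2 cnj_om cnj_om2 by auto

lemma gen_in_pair: "(x,y) \<in> gen_rel E \<Longrightarrow> (x,y) \<in> pair_rel E"
  by (auto simp: pair_rel_def)

lemma Fp_eq_rel:
  fixes E :: "'a::finite set set"
  assumes card3: "\<forall>e\<in>E. card e = 3" and x: "x \<in> MCN E" and y: "y \<in> MCN E" and F: "Fp x = Fp y"
  shows "(x,y) \<in> pair_rel E"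
proof -
  obtain v where gx: "good E x v" and nx: "\<forall>i\<in>gcomp E v. cmod (x i) = 1"
    using MCN_good[OF card3 x] by blast
  obtain w where gy0: "good E y w" and ny0: "\<forall>i\<in>gcomp E w. cmod (y i) = 1"
    using MCN_good[OF card3 y] by blast
  let ?C = "gcomp E v"
  have "supp y = supp x" using F Union_Fp by metis
  hence Cw: "gcomp E w = ?C" using g_supp[OF card3 gx] g_supp[OF card3 gy0] by simp
  have gy: "good E y v" using gy0 Cw by (simp add: good_def)
  have ny: "\<forall>i\<in>?C. cmod (y i) = 1" using ny0 Cw by simp
  have vC: "v \<in> ?C" by (rule comp_self)
  have Nx: "N_vec x" using x by (simp add: MCN_def)
  have "three E x v" by (rule g_three[OF card3 gx Nx])
  then obtain a where aC: "a \<in> ?C" and xa: "x a \<noteq> x v"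
    unfolding three_def[OF card3 gx] by metis
  have key: "x j = x i \<longleftrightarrow> y j = y i" if "i \<in> ?C" for i j
  proof -
    have "lvl x i \<in> Fp y" using F that g_supp[OF card3 gx] by (auto simp: Fp_def)
    then obtain l where l: "lvl x i = lvl y l" by (auto simp: Fp_def)
    have "i \<in> lvl y l" using l by (auto simp: lvl_def dest: sym)
    hence "lvl y l = lvl y i" by (auto simp: lvl_def)
    hence "lvl x i = lvl y i" using l by simp
    thus ?thesis by (auto simp: lvl_def set_eq_iff)
  qed
  have xv: "x v \<noteq> 0" and yv: "y v \<noteq> 0" using g_nz[OF card3 gx vC] g_nz[OF card3 gy vC] by auto
  have cx: "cmod (x v) = 1" "cmod (y v) = 1" using nx ny vC by auto
  define u where "u i = x i / x v" for i
  define u' where "u' i = y i / y v" for i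
  have ru: "i \<in> ?C \<Longrightarrow> (u i)^3 = 1" for i using g_root[OF card3 gx] by (simp add: u_def)
  have ru': "i \<in> ?C \<Longrightarrow> (u' i)^3 = 1" for i using g_root[OF card3 gy] by (simp add: u'_def)
  have eqv: "u i = u j \<longleftrightarrow> u' i = u' j" if "i \<in> ?C" "j \<in> ?C" for i j
    using key[OF that(1), of j] xv yv by (auto simp: u_def u'_def)
  have uv: "u v = 1" "u' v = 1" using xv yv by (auto simp: u_def u'_def)
  have ua: "u a \<noteq> 1" using xa xv by (auto simp: u_def)
  have ua': "u' a \<noteq> 1" using eqv[OF aC vC] uv ua by simp
  have m: "(u' a = u a \<longrightarrow> u' i = u i) \<and> (u' a \<noteq> u a \<longrightarrow> u' i = cnj (u i))" if "i \<in> ?C" for i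
    by (rule root_match[OF ru[OF that] ru'[OF that] ru[OF aC] ru'[OF aC] ua ua'])
       (use eqv[OF that vC] eqv[OF that aC] uv in auto)
  have off: "i \<notin> ?C \<Longrightarrow> x i = 0 \<and> y i = 0" for i
    using g_zero[OF card3 gx] g_zero[OF card3 gy] by auto
  show ?thesis
  proof (cases "u' a = u a")
    case True
    define c where "c = y v / x v"
    have "cmod c = 1" using cx by (simp add: c_def norm_divide)
    hence c: "c = cis (Arg c)" by (rule unit_cis)
    have "y i = c * x i" for i
    proof (cases "i \<in> ?C")
      case True
      hence "u' i = u i" using m \<open>u' a = u a\<close> by blast
      thus ?thesis using xv yv by (simp add: u_def u'_def c_def field_simps)
    next
      case False thus ?thesis using off by simp
    qed
    hence "y = (\<lambda>i. cis (Arg c) * x i)" using c by (metis ext)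
    hence "(x,y) \<in> gen_rel E" using x y by (auto simp: gen_rel_def)
    thus ?thesis by (rule gen_in_pair)
  next
    case False
    define z where "z = (\<lambda>i. cnj (x i))"
    have zM: "z \<in> MCN E" unfolding z_def by (rule MCN_cnj[OF x])
    have "(x,z) \<in> gen_rel E" using x zM by (auto simp: gen_rel_def z_def)
    define c where "c = y v / cnj (x v)"
    have "cmod c = 1" using cx by (simp add: c_def norm_divide)
    hence c: "c = cis (Arg c)" by (rule unit_cis)
    have "y i = c * z i" for i
    proof (cases "i \<in> ?C")
      case True
      hence "u' i = cnj (u i)" using m \<open>u' a \<noteq> u a\<close> by blast
      thus ?thesis using xv yv by (simp add: u_def u'_def c_def z_def field_simps)
    next
      case False thus ?thesis using off by (simp add: z_def)
    qed
    hence "y = (\<lambda>i. cis (Arg c) * z i)" using c by (metis ext)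
    hence "(z,y) \<in> gen_rel E" using zM y by (auto simp: gen_rel_def)
    with \<open>(x,z) \<in> gen_rel E\<close> show ?thesis
      using gen_in_pair by (metis pair_rel_def rtrancl_trans)
  qed
qed

lemma card_kernel:
  assumes "\<forall>x\<in>A. \<forall>y\<in>A. (f x = f y \<longleftrightarrow> g x = g y)"
  shows "bij_betw (\<lambda>b. g (inv_into A f b)) (f ` A) (g ` A)"
proof -
  have iv: "\<And>a. a \<in> A \<Longrightarrow> inv_into A f (f a) \<in> A \<and> f (inv_into A f (f a)) = f a"
    by (simp add: inv_into_into f_inv_into_f)
  show ?thesis
    unfolding bij_betw_def
  proof
    show "inj_on (\<lambda>b. g (inv_into A f b)) (f ` A)"
    proof (rule inj_onI)
      fix b1 b2 assume "b1 \<in> f ` A" "b2 \<in> f ` A" "g (inv_into A f b1) = g (inv_into A f b2)"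
      then obtain a1 a2 where a: "a1 \<in> A" "a2 \<in> A" "b1 = f a1" "b2 = f a2"
        and gg: "g (inv_into A f (f a1)) = g (inv_into A f (f a2))" by blast
      have "f (inv_into A f (f a1)) = f (inv_into A f (f a2))"
        using assms iv[OF a(1)] iv[OF a(2)] gg by blast
      thus "b1 = b2" using iv[OF a(1)] iv[OF a(2)] a by simp
    qed
    show "(\<lambda>b. g (inv_into A f b)) ` f ` A = g ` A"
    proof
      show "(\<lambda>b. g (inv_into A f b)) ` f ` A \<subseteq> g ` A"
      proof
        fix c assume "c \<in> (\<lambda>b. g (inv_into A f b)) ` f ` A"
        then obtain a where a: "a \<in> A" "c = g (inv_into A f (f a))" by blast
        have "g (inv_into A f (f a)) = g a" using assms iv[OF a(1)] a(1) by blast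
        thus "c \<in> g ` A" using a by simp
      qed
      show "g ` A \<subseteq> (\<lambda>b. g (inv_into A f b)) ` f ` A"
      proof
        fix c assume "c \<in> g ` A"
        then obtain a where a: "a \<in> A" "c = g a" by blast
        have "g (inv_into A f (f a)) = g a" using assms iv[OF a(1)] a(1) by blast
        thus "c \<in> (\<lambda>b. g (inv_into A f b)) ` f ` A" using a by (metis imageI)
      qed
    qed
  qed
qed

lemma pair_sym: "sym (pair_rel E)"
  unfolding pair_rel_def by (rule sym_rtrancl) (auto simp: sym_def)

lemma pair_trans: "trans (pair_rel E)"
  unfolding pair_rel_def by (rule trans_rtrancl)

lemma classes_eq:
  fixes E :: "'a::finite set set"
  assumes card3: "\<forall>e\<in>E. card e = 3" and x: "x \<in> MCN E" and y: "y \<in> MCN E"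
  shows "pair_rel E `` {x} = pair_rel E `` {y} \<longleftrightarrow> Fp x = Fp y"
proof
  assume h: "pair_rel E `` {x} = pair_rel E `` {y}"
  have "(y,y) \<in> pair_rel E" by (simp add: pair_rel_def)
  hence "(x,y) \<in> pair_rel E" using h by blast
  thus "Fp x = Fp y" by (rule pair_Fp)
next
  assume "Fp x = Fp y"
  hence xy: "(x,y) \<in> pair_rel E" by (rule Fp_eq_rel[OF card3 x y])
  hence yx: "(y,x) \<in> pair_rel E" using pair_sym by (metis symD)
  show "pair_rel E `` {x} = pair_rel E `` {y}"
    using xy yx pair_trans by (auto dest: transD)
qed

lemma Fp_image:
  fixes E :: "'a::finite set set"
  assumes card3: "\<forall>e\<in>E. card e = 3"
  shows "Fp ` MCN E = (\<Union>C\<in>components E. tripartitions E C)"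
proof
  show "Fp ` MCN E \<subseteq> (\<Union>C\<in>components E. tripartitions E C)"
  proof
    fix P assume "P \<in> Fp ` MCN E"
    then obtain x where x: "x \<in> MCN E" "P = Fp x" by blast
    obtain v where gx: "good E x v" using MCN_good[OF card3 x(1)] by blast
    have "N_vec x" using x by (simp add: MCN_def)
    hence "three E x v" by (rule g_three[OF card3 gx])
    hence "Fp x \<in> tripartitions E (gcomp E v)" by (rule g_trip[OF card3 gx])
    moreover have "gcomp E v \<in> components E" by (simp add: components_eq)
    ultimately show "P \<in> (\<Union>C\<in>components E. tripartitions E C)" using x by blast
  qed
  show "(\<Union>C\<in>components E. tripartitions E C) \<subseteq> Fp ` MCN E"
  proof
    fix P assume "P \<in> (\<Union>C\<in>components E. tripartitions E C)"
    then obtain v where "P \<in> tripartitions E (gcomp E v)" by (auto simp: components_eq)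
    then obtain x where "x \<in> MCN E" "Fp x = P" using construct[OF card3] by blast
    thus "P \<in> Fp ` MCN E" by blast
  qed
qed

lemma card_union:
  fixes E :: "'a::finite set set"
  shows "card (\<Union>C\<in>components E. tripartitions E C) = num_tripartite_components E"
  unfolding num_tripartite_components_def
proof (rule card_UN_disjoint)
  show "finite (components E)" by (rule finite)
  show "\<forall>C\<in>components E. finite (tripartitions E C)" by (simp add: finite)
  show "\<forall>C\<in>components E. \<forall>C'\<in>components E. C \<noteq> C' \<longrightarrow> tripartitions E C \<inter> tripartitions E C' = {}"
    by (auto simp: tripartitions_def partition_on_def)
qed

theorem proposition6p1:
  fixes E :: "'a::finite set set"
  assumes "card (UNIV :: 'a set) \<ge> 3"
    and "E \<noteq> {}"
    and "\<forall>e\<in>E. card e = 3"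
  shows "finite (MCN E // pair_rel E) \<and>
         card (MCN E // pair_rel E) = num_tripartite_components E"
proof -
  have card3: "\<forall>e\<in>E. card e = 3" using assms(3) .
  have Q: "MCN E // pair_rel E = (\<lambda>x. pair_rel E `` {x}) ` MCN E"
    by (auto simp: quotient_def)
  have b: "bij_betw (\<lambda>b. Fp (inv_into (MCN E) (\<lambda>x. pair_rel E `` {x}) b))
            ((\<lambda>x. pair_rel E `` {x}) ` MCN E) (Fp ` MCN E)"
    by (rule card_kernel) (use classes_eq[OF card3] in blast)
  have fin: "finite (Fp ` MCN E)" by (rule finite)
  have "finite (MCN E // pair_rel E)" unfolding Q using b fin bij_betw_finite by blast
  moreover have "card (MCN E // pair_rel E) = card (Fp ` MCN E)"
    unfolding Q using b by (rule bij_betw_same_card)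
  ultimately show ?thesis using Fp_image[OF card3] card_union by simp
qed

end
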